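(* Let $k=n$, $\Omega\subset\mathbb{R}^n$ a bounded domain with boundary $\Gamma$, and $\psi=\psi(x,u,p)$ a smooth positive function on $\Omega\times(0,\infty)\times\mathbb{R}^n$. Let $v\in C^2(\Omega)\cap C^0(\overline\Omega)$ be locally convex with $\det(\delta_{kl}+v_kv_l+vv_{kl})=0$ in $\Omega$, $v=0$ on $\Gamma$. Let $\underline u\in C^4(\Omega)\cap C^0(\overline\Omega)$ be strictly locally convex with $\det A[\underline u]\ge\psi(x,\underline u,D\underline u)$ in $\Omega$, $\underline u=0$ on $\Gamma$, and assume the level sets $\Gamma_\epsilon$ are regular boundaries of $\Omega_\epsilon$ for small $\epsilon>0$. For all sufficiently small $\epsilon>0$ let $u^\epsilon\ge\underline u$ be a smooth strictly locally convex solution of $\det A[u^\epsilon]=\psi(x,u^\epsilon,Du^\epsilon)$ in $\Omega_\epsilon$, $u^\epsilon=\epsilon$ on $\Gamma_\epsilon$, and assume the uniform interior $C^1$ bound: for every sufficiently small $\epsilon'>0$ there is $C(\epsilon')$ with $\|u^\epsilon\|_{C^1(\overline{\Omega_{\epsilon'}})}\le C(\epsilon')$ for all $0<\epsilon<\epsilon'/2$. Set $U^\epsilon=(u^\epsilon)^2+|x|^2$, $V=v^2+|x|^2$. Then for every sufficiently small $\epsilon_0>0$, with $r=\mathrm{dist}(\Omega_{\epsilon_0},\Gamma_{\epsilon_0/2})$, there exists $\tau>0$ depending on $\epsilon_0$ but not on $\epsilon$ such that $\inf_{\Omega_{\epsilon_0}}(V-U^\epsilon)\ge\tau r^2$ for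 all $0<\epsilon<\epsilon_0/4$.
   Context: Upper half-space model of $\mathbb{H}^{n+1}$. For positive $u$, $A[u]=(a_{ij})$, $a_{ij}=\frac1w(\delta_{ij}+u\gamma^{ik}u_{kl}\gamma^{lj})$, $w=\sqrt{1+|Du|^2}$, $\gamma^{ik}=\delta_{ik}-\frac{u_iu_k}{w(1+w)}$; its eigenvalues $\kappa[u]$ are the hyperbolic principal curvatures of the graph of $u$. Strictly locally convex: $\kappa[u]\in\Gamma_n$ (all $\kappa_i>0$); locally convex: $\kappa[u]\in\overline{\Gamma_n}$. $\Gamma_\epsilon=\{x\in\Omega:\underline u(x)=\epsilon\}$, $\Omega_\epsilon=\{x\in\Omega:\underline u(x)>\epsilon\}$; regular boundary means $\Gamma_\epsilon$ is an $(n-1)$-dimensional $C^4$ hypersurface with $|D\underline u|>0$ on it. *)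

theory Defs
  imports "HOL-Analysis.Analysis"
begin

definition pderiv_dir :: "('a::euclidean_space \<Rightarrow> real) \<Rightarrow> 'a \<Rightarrow> 'a \<Rightarrow> real" where
  "pderiv_dir f b x = frechet_derivative f (at x) b"

fun Ck_on :: "nat \<Rightarrow> 'a::euclidean_space set \<Rightarrow> ('a \<Rightarrow> real) \<Rightarrow> bool" where
  "Ck_on 0 S f = continuous_on S f"
| "Ck_on (Suc k) S f = (f differentiable_on S \<and> (\<forall>b\<in>Basis. Ck_on k S (pderiv_dir f b)))"

definition smooth_on :: "'a::euclidean_space set \<Rightarrow> ('a \<Rightarrow> real) \<Rightarrow> bool" where
  "smooth_on S f \<longleftrightarrow> (\<forall>k. Ck_on k S f)"

definition pd :: "(real^'n \<Rightarrow> real) \<Rightarrow> 'n \<Rightarrow> real^'n \<Rightarrow> real" where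
  "pd u i x = frechet_derivative u (at x) (axis i 1)"

definition grad :: "(real^'n \<Rightarrow> real) \<Rightarrow> real^'n \<Rightarrow> real^'n" where
  "grad u x = (\<chi> i. pd u i x)"

definition hess :: "(real^'n \<Rightarrow> real) \<Rightarrow> real^'n \<Rightarrow> real^'n^'n" where
  "hess u x = (\<chi> i j. pd (pd u j) i x)"

definition wfun :: "(real^'n \<Rightarrow> real) \<Rightarrow> real^'n \<Rightarrow> real" where
  "wfun u x = sqrt (1 + (norm (grad u x))\<^sup>2)"

definition gammaM :: "(real^'n \<Rightarrow> real) \<Rightarrow> real^'n \<Rightarrow> real^'n^'n" where
  "gammaM u x = (\<chi> i k. (if i = k then 1 else 0)
       - grad u x $ i * grad u x $ k / (wfun u x * (1 + wfun u x)))"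

definition Amat :: "(real^'n \<Rightarrow> real) \<Rightarrow> real^'n \<Rightarrow> real^'n^'n" where
  "Amat u x = (\<chi> i j. (1 / wfun u x) * ((if i = j then 1 else 0)
       + u x * (gammaM u x ** hess u x ** gammaM u x) $ i $ j))"

definition is_eigenvalue :: "real^'n^'n \<Rightarrow> real \<Rightarrow> bool" where
  "is_eigenvalue M l \<longleftrightarrow> (\<exists>y. y \<noteq> 0 \<and> M *v y = l *\<^sub>R y)"

(* kappa[u] in Gamma_n at every point (u positive) *)
definition strictly_locally_convex :: "(real^'n \<Rightarrow> real) \<Rightarrow> (real^'n) set \<Rightarrow> bool" where
  "strictly_locally_convex u S \<longleftrightarrow>
     (\<forall>x\<in>S. u x > 0 \<and> (\<forall>l. is_eigenvalue (Amat u x) l \<longrightarrow> l > 0))"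

(* kappa[u] in the closure of Gamma_n at every point (u positive) *)
definition locally_convex :: "(real^'n \<Rightarrow> real) \<Rightarrow> (real^'n) set \<Rightarrow> bool" where
  "locally_convex u S \<longleftrightarrow>
     (\<forall>x\<in>S. u x > 0 \<and> (\<forall>l. is_eigenvalue (Amat u x) l \<longrightarrow> l \<ge> 0))"

definition GammaL :: "(real^'n) set \<Rightarrow> (real^'n \<Rightarrow> real) \<Rightarrow> real \<Rightarrow> (real^'n) set" where
  "GammaL \<Omega> ub e = {x\<in>\<Omega>. ub x = e}"

definition OmegaL :: "(real^'n) set \<Rightarrow> (real^'n \<Rightarrow> real) \<Rightarrow> real \<Rightarrow> (real^'n) set" where
  "OmegaL \<Omega> ub e = {x\<in>\<Omega>. ub x > e}"

(* Gamma_e is a regular boundary of Omega_e: it is the boundary of Omega_e and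
   |D ub| > 0 on it (with ub of class C^4 this makes Gamma_e an (n-1)-dimensional
   C^4 hypersurface by the implicit function theorem) *)
definition regular_boundary :: "(real^'n) set \<Rightarrow> (real^'n \<Rightarrow> real) \<Rightarrow> real \<Rightarrow> bool" where
  "regular_boundary \<Omega> ub e \<longleftrightarrow>
     frontier (OmegaL \<Omega> ub e) = GammaL \<Omega> ub e \<and>
     (\<forall>x\<in>GammaL \<Omega> ub e. norm (grad ub x) > 0)"

end

theory Submission
  imports Defs "HOL-Analysis.Analysis"
begin

lemma pd_expand:
  fixes f :: "real^'n \<Rightarrow> real"
  assumes "f differentiable (at x)"
  shows "(f has_derivative (\<lambda>h. \<Sum>i\<in>UNIV. h$i * pd f i x)) (at x)"
proof -
  let ?D = "frechet_derivative f (at x)"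
  have d: "(f has_derivative ?D) (at x)" using assms frechet_derivative_works by blast
  have lin: "linear ?D" using d has_derivative_linear by blast
  have "?D h = (\<Sum>i\<in>UNIV. h$i * pd f i x)" for h
  proof -
    have "?D h = ?D (\<Sum>i\<in>UNIV. h$i *\<^sub>R axis i 1)"
      using basis_expansion[of h] by (simp add: scalar_mult_eq_scaleR)
    also have "\<dots> = (\<Sum>i\<in>UNIV. h$i * ?D (axis i 1))"
      using lin by (simp add: linear_sum linear_scale)
    finally show ?thesis by (simp add: pd_def)
  qed
  then have "?D = (\<lambda>h. \<Sum>i\<in>UNIV. h$i * pd f i x)" by auto
  then show ?thesis using d by simp
qed

lemma line_deriv:
  fixes f :: "real^'n \<Rightarrow> real"
  assumes "f differentiable (at (x + t *\<^sub>R y))"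
  shows "((\<lambda>s. f (x + s *\<^sub>R y)) has_real_derivative (\<Sum>i\<in>UNIV. y$i * pd f i (x + t *\<^sub>R y))) (at t)"
proof -
  have d1: "((\<lambda>s. x + s *\<^sub>R y) has_derivative (\<lambda>s. s *\<^sub>R y)) (at t)"
    by (auto intro!: derivative_eq_intros)
  have "((\<lambda>s. f (x + s *\<^sub>R y)) has_derivative (\<lambda>s. \<Sum>i\<in>UNIV. (s *\<^sub>R y)$i * pd f i (x + t *\<^sub>R y))) (at t)"
    using has_derivative_compose[OF d1 pd_expand[OF assms]] by simp
  moreover have "(\<lambda>s. \<Sum>i\<in>UNIV. (s *\<^sub>R y)$i * pd f i (x + t *\<^sub>R y)) = (*) (\<Sum>i\<in>UNIV. y$i * pd f i (x + t *\<^sub>R y))"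
    by (auto simp: sum_distrib_left mult_ac)
  ultimately show ?thesis by (simp add: has_field_derivative_def)
qed

lemma max_second_deriv:
  fixes G G' :: "real \<Rightarrow> real"
  assumes "0 < \<delta>" and der: "\<And>s. \<bar>s\<bar> < \<delta> \<Longrightarrow> (G has_real_derivative G' s) (at s)"
    and der2: "(G' has_real_derivative d) (at 0)"
    and mx: "\<And>s. \<bar>s\<bar> < \<delta> \<Longrightarrow> G s \<le> G 0"
  shows "d \<le> 0"
proof (rule ccontr)
  assume "\<not> d \<le> 0" then have dp: "0 < d" by simp
  have g0: "G' 0 = 0"
    by (rule DERIV_local_max[OF der[of 0] \<open>0<\<delta>\<close>]) (use assms in auto)
  obtain d1 where d1: "d1 > 0" "\<And>h. h > 0 \<Longrightarrow> h < d1 \<Longrightarrow> G' 0 < G' (0 + h)"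
    using DERIV_pos_inc_right[OF der2 dp] by blast
  define h where "h = min \<delta> d1 / 2"
  have h: "0 < h" "h < \<delta>" "h < d1" using d1 \<open>0<\<delta>\<close> by (auto simp: h_def)
  obtain z where z: "0 < z" "z < h" "G h - G 0 = (h - 0) * G' z"
    using MVT2[of 0 h G G'] h der by force
  have "G' z > 0" using d1(2)[of z] z h g0 by simp
  then have "h * G' z > 0" using z h by simp
  then have "G h > G 0" using z(3) by simp
  with mx[of h] h show False by simp
qed

definition D1 :: "(real^'n \<Rightarrow> real) \<Rightarrow> real^'n \<Rightarrow> real^'n \<Rightarrow> real" where
  "D1 f p y = (\<Sum>i\<in>UNIV. y$i * pd f i p)"
definition D2 :: "(real^'n \<Rightarrow> real) \<Rightarrow> real^'n \<Rightarrow> real^'n \<Rightarrow> real" where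
  "D2 f p y = (\<Sum>i\<in>UNIV. y$i * (\<Sum>j\<in>UNIV. y$j * pd (pd f i) j p))"

definition C2at :: "(real^'n \<Rightarrow> real) \<Rightarrow> (real^'n) set \<Rightarrow> bool" where
  "C2at f S \<longleftrightarrow> (\<forall>x\<in>S. f differentiable (at x) \<and> (\<forall>i. pd f i differentiable (at x)))"

lemma line_deriv1:
  assumes "C2at f S" "x + t *\<^sub>R y \<in> S"
  shows "((\<lambda>s. f (x + s *\<^sub>R y)) has_real_derivative D1 f (x + t *\<^sub>R y) y) (at t)"
  using line_deriv[of f x t y] assms unfolding C2at_def D1_def by auto

lemma line_deriv2:
  assumes "C2at f S" "x + t *\<^sub>R y \<in> S"
  shows "((\<lambda>s. D1 f (x + s *\<^sub>R y) y) has_real_derivative D2 f (x + t *\<^sub>R y) y) (at t)"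
proof -
  have "((\<lambda>s. pd f i (x + s *\<^sub>R y)) has_real_derivative (\<Sum>j\<in>UNIV. y$j * pd (pd f i) j (x + t *\<^sub>R y))) (at t)" for i
    using line_deriv[of "pd f i" x t y] assms unfolding C2at_def by auto
  then show ?thesis unfolding D1_def D2_def
    by (auto intro!: DERIV_sum DERIV_cmult)
qed

lemma sq_exp: "(a + s *\<^sub>R y) \<bullet> (a + s *\<^sub>R y) = (norm a)\<^sup>2 + 2 * s * (a \<bullet> y) + s\<^sup>2 * (norm y)\<^sup>2"
  for a y :: "'a::real_inner"
proof -
  have "(a + s *\<^sub>R y) \<bullet> (a + s *\<^sub>R y) = a \<bullet> a + 2 * s * (a \<bullet> y) + s\<^sup>2 * (y \<bullet> y)"
    by (simp add: inner_add_left inner_add_right inner_commute power2_eq_square algebra_simps)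
  then show ?thesis by (simp add: dot_square_norm)
qed

lemma comparison_at_max:
  fixes f g :: "real^'n \<Rightarrow> real"
  assumes S: "open S" and f: "C2at f S" and g: "C2at g S" and pS: "p \<in> S"
    and mx: "\<And>x. x \<in> S \<Longrightarrow> (f x)\<^sup>2 - (g x)\<^sup>2 - lam * (norm (x - x0))\<^sup>2
                      \<le> (f p)\<^sup>2 - (g p)\<^sup>2 - lam * (norm (p - x0))\<^sup>2"
  shows "(D1 f p y)\<^sup>2 + f p * D2 f p y \<le> (D1 g p y)\<^sup>2 + g p * D2 g p y + lam * (norm y)\<^sup>2"
proof -
  obtain e where e: "e > 0" "ball p e \<subseteq> S" using S pS open_contains_ball by blast
  have ny: "0 < norm y + 1" using norm_ge_zero[of y] by linarith
  define \<delta> where "\<delta> = e / (norm y + 1)"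
  have dp: "\<delta> > 0" unfolding \<delta>_def using e by (intro divide_pos_pos ny)
  have inS: "p + s *\<^sub>R y \<in> S" if "\<bar>s\<bar> < \<delta>" for s
  proof -
    have "norm (s *\<^sub>R y) = \<bar>s\<bar> * norm y" by simp
    also have "\<dots> \<le> \<bar>s\<bar> * (norm y + 1)" by (simp add: mult_left_mono)
    also have "\<dots> < \<delta> * (norm y + 1)" using that ny by (intro mult_strict_right_mono) auto
    also have "\<dots> = e" using ny by (simp add: \<delta>_def)
    finally have "dist p (p + s *\<^sub>R y) < e" by (simp add: dist_norm)
    then show ?thesis using e by auto
  qed
  define G where "G s = (f (p + s *\<^sub>R y))\<^sup>2 - (g (p + s *\<^sub>R y))\<^sup>2
       - lam * ((norm (p - x0))\<^sup>2 + 2 * s * ((p - x0) \<bullet> y) + s\<^sup>2 * (norm y)\<^sup>2)" for s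
  have Geq: "G s = (f (p + s *\<^sub>R y))\<^sup>2 - (g (p + s *\<^sub>R y))\<^sup>2 - lam * (norm ((p + s *\<^sub>R y) - x0))\<^sup>2" for s
  proof -
    have "(norm ((p + s *\<^sub>R y) - x0))\<^sup>2 = ((p - x0) + s *\<^sub>R y) \<bullet> ((p - x0) + s *\<^sub>R y)"
      by (simp add: power2_norm_eq_inner algebra_simps)
    also have "\<dots> = (norm (p - x0))\<^sup>2 + 2 * s * ((p - x0) \<bullet> y) + s\<^sup>2 * (norm y)\<^sup>2"
      by (rule sq_exp)
    finally show ?thesis by (simp add: G_def)
  qed
  define G' where "G' s = 2 * f (p + s *\<^sub>R y) * D1 f (p + s *\<^sub>R y) y - 2 * g (p + s *\<^sub>R y) * D1 g (p + s *\<^sub>R y) y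
       - lam * (2 * ((p - x0) \<bullet> y) + 2 * s * (norm y)\<^sup>2)" for s
  have der: "(G has_real_derivative G' s) (at s)" if "\<bar>s\<bar> < \<delta>" for s
  proof -
    note a = line_deriv1[OF f inS[OF that]] line_deriv1[OF g inS[OF that]]
    show ?thesis unfolding G_def G'_def
      by (rule derivative_eq_intros a refl | simp add: algebra_simps power2_eq_square)+
  qed
  have der2: "(G' has_real_derivative
      (2 * (D1 f p y)\<^sup>2 + 2 * f p * D2 f p y - 2 * (D1 g p y)\<^sup>2 - 2 * g p * D2 g p y - lam * 2 * (norm y)\<^sup>2)) (at 0)"
  proof -
    have p0: "p + 0 *\<^sub>R y \<in> S" using pS by simp
    note a = line_deriv1[OF f p0] line_deriv1[OF g p0] line_deriv2[OF f p0] line_deriv2[OF g p0]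
    show ?thesis unfolding G'_def
      by (rule derivative_eq_intros a refl | simp add: algebra_simps power2_eq_square)+
  qed
  have mx': "G s \<le> G 0" if "\<bar>s\<bar> < \<delta>" for s
    using mx[OF inS[OF that]] by (simp add: Geq)
  have "2 * (D1 f p y)\<^sup>2 + 2 * f p * D2 f p y - 2 * (D1 g p y)\<^sup>2 - 2 * g p * D2 g p y - lam * 2 * (norm y)\<^sup>2 \<le> 0"
    by (rule max_second_deriv[OF dp der der2 mx'])
  then show ?thesis by (simp add: algebra_simps)
qed

lemma sym_inner:
  fixes A :: "real^'n^'n"
  assumes sym: "transpose A = A"
  shows "x \<bullet> (A *v y) = (A *v x) \<bullet> y"
proof -
  have s: "A$i$j = A$j$i" for i j using sym by (metis transpose_def vec_lambda_beta)
  have "x \<bullet> (A *v y) = (\<Sum>i\<in>UNIV. \<Sum>j\<in>UNIV. x$i * A$i$j * y$j)"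
    by (simp add: inner_vec_def matrix_vector_mult_def sum_distrib_left mult_ac)
  also have "\<dots> = (\<Sum>j\<in>UNIV. \<Sum>i\<in>UNIV. x$i * A$i$j * y$j)" by (rule sum.swap)
  also have "\<dots> = (\<Sum>j\<in>UNIV. \<Sum>i\<in>UNIV. A$j$i * x$i * y$j)"
  proof (intro sum.cong refl)
    fix i j show "x$i * A$i$j * y$j = A$j$i * x$i * y$j" by (subst s) (simp add: mult_ac)
  qed
  also have "\<dots> = (A *v x) \<bullet> y"
    by (simp add: inner_vec_def matrix_vector_mult_def sum_distrib_right sum_distrib_left mult_ac)
  finally show ?thesis .
qed

lemma lin_coef_zero:
  fixes b c :: real
  assumes "\<And>t. 2 * t * b + t\<^sup>2 * c \<ge> 0"
  shows "b = 0"
proof (rule ccontr)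
  assume nb: "b \<noteq> 0"
  define k where "k = \<bar>c\<bar> + 1"
  have k: "k > 0" "c \<le> k" "k \<ge> 1" by (auto simp: k_def)
  define t where "t = - b / k"
  have "2 * t * b + t\<^sup>2 * c \<le> 2 * t * b + t\<^sup>2 * k"
    using k by (simp add: mult_left_mono)
  also have "\<dots> = - b\<^sup>2 / k" using k by (simp add: t_def power2_eq_square field_simps)
  also have "\<dots> < 0" using nb k by simp
  finally show False using assms[of t] by simp
qed

lemma min_eig:
  fixes A :: "real^'n^'n"
  assumes sym: "transpose A = A" and S: "subspace S" and inv: "\<And>x. x \<in> S \<Longrightarrow> A *v x \<in> S"
    and nz: "x0 \<in> S" "x0 \<noteq> 0"
  shows "\<exists>y\<in>S. norm y = 1 \<and> A *v y = (y \<bullet> (A *v y)) *\<^sub>R y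
           \<and> (\<forall>x\<in>S. (y \<bullet> (A *v y)) * (norm x)\<^sup>2 \<le> x \<bullet> (A *v x))"
proof -
  let ?K = "S \<inter> sphere 0 1"
  have cK: "compact ?K" using S by (intro closed_Int_compact closed_subspace) auto
  have "x0 /\<^sub>R norm x0 \<in> ?K" using nz S by (simp add: subspace_scale)
  then have neK: "?K \<noteq> {}" by blast
  have cont: "continuous_on ?K (\<lambda>z. z \<bullet> (A *v z))"
    by (intro continuous_intros linear_continuous_on matrix_vector_mul_bounded_linear)
  obtain y where y: "y \<in> ?K" and ymin: "\<And>z. z \<in> ?K \<Longrightarrow> y \<bullet> (A *v y) \<le> z \<bullet> (A *v z)"
    using continuous_attains_inf[OF cK neK cont] by blast
  define m where "m = y \<bullet> (A *v y)"
  have yS: "y \<in> S" and yn: "norm y = 1" using y by auto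
  have ray: "m * (norm x)\<^sup>2 \<le> x \<bullet> (A *v x)" if "x \<in> S" for x
  proof (cases "x = 0")
    case True then show ?thesis by simp
  next
    case False
    let ?z = "x /\<^sub>R norm x"
    have "?z \<in> ?K" using False that S by (simp add: subspace_scale)
    then have "m \<le> ?z \<bullet> (A *v ?z)" using ymin m_def by blast
    also have "\<dots> = (x \<bullet> (A *v x)) / (norm x)\<^sup>2"
      by (simp add: matrix_vector_mult_scaleR power2_eq_square divide_inverse)
    finally show ?thesis using False by (simp add: field_simps)
  qed
  have orth: "z \<bullet> (A *v y) = 0" if zS: "z \<in> S" and zy: "z \<bullet> y = 0" for z
  proof -
    have "2 * t * (z \<bullet> (A *v y)) + t\<^sup>2 * (z \<bullet> (A *v z) - m * (norm z)\<^sup>2) \<ge> 0" for t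
    proof -
      have xS: "y + t *\<^sub>R z \<in> S" using yS zS S by (simp add: subspace_add subspace_scale)
      have e1: "(y + t *\<^sub>R z) \<bullet> (A *v (y + t *\<^sub>R z)) = m + 2 * t * (z \<bullet> (A *v y)) + t\<^sup>2 * (z \<bullet> (A *v z))"
      proof -
        have "y \<bullet> (A *v z) = z \<bullet> (A *v y)" using sym_inner[OF sym, of y z] by (simp add: inner_commute)
        then show ?thesis
          by (simp add: matrix_vector_right_distrib matrix_vector_mult_scaleR inner_add_left inner_add_right
              m_def power2_eq_square algebra_simps)
      qed
      have e2: "(norm (y + t *\<^sub>R z))\<^sup>2 = 1 + t\<^sup>2 * (norm z)\<^sup>2"
      proof -
        have "(norm (y + t *\<^sub>R z))\<^sup>2 = (y + t *\<^sub>R z) \<bullet> (y + t *\<^sub>R z)" by (simp add: dot_square_norm)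
        also have "\<dots> = y \<bullet> y + t\<^sup>2 * (z \<bullet> z)" using zy
          by (simp add: inner_add_left inner_add_right inner_commute power2_eq_square)
        finally show ?thesis using yn by (simp add: dot_square_norm)
      qed
      have "m * (1 + t\<^sup>2 * (norm z)\<^sup>2) \<le> m + 2 * t * (z \<bullet> (A *v y)) + t\<^sup>2 * (z \<bullet> (A *v z))"
        using ray[OF xS] e1 e2 by simp
      then show ?thesis by (simp add: algebra_simps)
    qed
    then show ?thesis by (rule lin_coef_zero)
  qed
  define w where "w = A *v y - m *\<^sub>R y"
  have wS: "w \<in> S" using inv[OF yS] yS S by (simp add: w_def subspace_diff subspace_scale)
  have yy: "y \<bullet> y = 1" using yn by (simp add: dot_square_norm)
  have "y \<bullet> w = y \<bullet> (A *v y) - m * (y \<bullet> y)" by (simp add: w_def inner_diff_right)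
  then have wy: "w \<bullet> y = 0" using yy by (simp add: m_def inner_commute)
  have "w \<bullet> w = w \<bullet> (A *v y) - m * (w \<bullet> y)" by (simp add: w_def inner_diff_right)
  also have "\<dots> = 0" using orth[OF wS wy] wy by simp
  finally have "w = 0" by simp
  then have "A *v y = m *\<^sub>R y" by (simp add: w_def)
  then show ?thesis using yS yn ray m_def by blast
qed

lemma spectral_sub:
  fixes A :: "real^'n^'n"
  assumes sym: "transpose A = A"
  shows "subspace S \<Longrightarrow> (\<forall>x\<in>S. A *v x \<in> S) \<Longrightarrow>
    \<exists>E. finite E \<and> E \<subseteq> S \<and> pairwise orthogonal E \<and>
        (\<forall>e\<in>E. norm e = 1 \<and> A *v e = (e \<bullet> (A *v e)) *\<^sub>R e) \<and> S \<subseteq> span E"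
proof (induction "dim S" arbitrary: S rule: less_induct)
  case less
  show ?case
  proof (cases "\<exists>x\<in>S. x \<noteq> 0")
    case False
    then have "S \<subseteq> span {}" by auto
    then show ?thesis by (intro exI[of _ "{}"]) auto
  next
    case True
    then obtain x0 where x0: "x0 \<in> S" "x0 \<noteq> 0" by blast
    obtain y where yS: "y \<in> S" and yn: "norm y = 1" and yeig: "A *v y = (y \<bullet> (A *v y)) *\<^sub>R y"
      using min_eig[OF sym less.prems(1) _ x0] less.prems(2) by blast
    define S' where "S' = S \<inter> {x. y \<bullet> x = 0}"
    have sub': "subspace S'" unfolding S'_def
      using less.prems(1) subspace_orthogonal_to_vector[of y]
      by (intro subspace_inter) (auto simp: orthogonal_def)
    have inv': "\<forall>x\<in>S'. A *v x \<in> S'"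
    proof
      fix x assume x: "x \<in> S'"
      have "y \<bullet> (A *v x) = (A *v y) \<bullet> x" by (rule sym_inner[OF sym])
      also have "\<dots> = 0" using x by (subst yeig) (simp add: S'_def)
      finally show "A *v x \<in> S'" using x less.prems(2) by (auto simp: S'_def)
    qed
    have yy: "y \<bullet> y = 1" using yn by (simp add: dot_square_norm)
    have ny: "y \<notin> S'" using yy by (simp add: S'_def)
    have "S' \<subseteq> S" by (auto simp: S'_def)
    moreover have "S' \<noteq> S" using ny yS by blast
    ultimately have "S' \<subset> S" by (rule psubsetI)
    then have "span S' \<subset> span S" using sub' less.prems(1) by (metis span_eq_iff)
    then have "dim S' < dim S" by (rule dim_psubset)
    then obtain E where E: "finite E" "E \<subseteq> S'" "pairwise orthogonal E"
        "\<forall>e\<in>E. norm e = 1 \<and> A *v e = (e \<bullet> (A *v e)) *\<^sub>R e" "S' \<subseteq> span E"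
      using less.hyps[OF _ sub' inv'] by blast
    show ?thesis
    proof (intro exI[of _ "insert y E"] conjI)
      show "finite (insert y E)" using E by simp
      show "insert y E \<subseteq> S" using E yS by (auto simp: S'_def)
      show "pairwise orthogonal (insert y E)"
        using E(2,3) by (auto simp: pairwise_insert orthogonal_def S'_def inner_commute)
      show "\<forall>e\<in>insert y E. norm e = 1 \<and> A *v e = (e \<bullet> (A *v e)) *\<^sub>R e" using E yn yeig by auto
      show "S \<subseteq> span (insert y E)"
      proof
        fix x assume x: "x \<in> S"
        let ?x' = "x - (y \<bullet> x) *\<^sub>R y"
        have "?x' \<in> S'" using x yS less.prems(1) yy
          by (auto simp: S'_def subspace_diff subspace_scale inner_diff_right)
        then have "?x' \<in> span (insert y E)" using E(5) span_mono[of E "insert y E"] by auto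
        moreover have "(y \<bullet> x) *\<^sub>R y \<in> span (insert y E)" by (simp add: span_base span_scale)
        ultimately have "?x' + (y \<bullet> x) *\<^sub>R y \<in> span (insert y E)" by (rule span_add)
        then show "x \<in> span (insert y E)" by simp
      qed
    qed
  qed
qed

lemma spectral_full:
  fixes A :: "real^'n^'n"
  assumes sym: "transpose A = A"
  shows "\<exists>y E. finite E \<and> card E = CARD('n) \<and> y \<in> E \<and> pairwise orthogonal E \<and>
        (\<forall>e\<in>E. norm e = 1 \<and> A *v e = (e \<bullet> (A *v e)) *\<^sub>R e) \<and>
        (\<forall>x. (y \<bullet> (A *v y)) * (norm x)\<^sup>2 \<le> x \<bullet> (A *v x))"
proof -
  obtain y where yn: "norm y = 1" and yeig: "A *v y = (y \<bullet> (A *v y)) *\<^sub>R y"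
     and ymin: "\<forall>x. (y \<bullet> (A *v y)) * (norm x)\<^sup>2 \<le> x \<bullet> (A *v x)"
    using min_eig[OF sym subspace_UNIV, of "axis undefined 1"] by (auto simp: axis_eq_0_iff)
  define S' where "S' = {x. y \<bullet> x = 0}"
  have sub': "subspace S'" unfolding S'_def
    using subspace_orthogonal_to_vector[of y] by (simp add: orthogonal_def)
  have inv': "\<forall>x\<in>S'. A *v x \<in> S'"
  proof
    fix x assume x: "x \<in> S'"
    have "y \<bullet> (A *v x) = (A *v y) \<bullet> x" by (rule sym_inner[OF sym])
    also have "\<dots> = 0" using x by (subst yeig) (simp add: S'_def)
    finally show "A *v x \<in> S'" by (auto simp: S'_def)
  qed
  have yy: "y \<bullet> y = 1" using yn by (simp add: dot_square_norm)
  obtain E where E: "finite E" "E \<subseteq> S'" "pairwise orthogonal E"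
        "\<forall>e\<in>E. norm e = 1 \<and> A *v e = (e \<bullet> (A *v e)) *\<^sub>R e" "S' \<subseteq> span E"
    using spectral_sub[OF sym sub' inv'] by blast
  let ?E = "insert y E"
  have po: "pairwise orthogonal ?E"
    using E(2,3) by (auto simp: pairwise_insert orthogonal_def S'_def inner_commute)
  have nrm: "\<forall>e\<in>?E. norm e = 1 \<and> A *v e = (e \<bullet> (A *v e)) *\<^sub>R e" using E yn yeig by auto
  have sp: "UNIV \<subseteq> span ?E"
  proof
    fix x :: "real^'n"
    let ?x' = "x - (y \<bullet> x) *\<^sub>R y"
    have "?x' \<in> S'" using yy by (auto simp: S'_def inner_diff_right)
    then have "?x' \<in> span ?E" using E(5) span_mono[of E ?E] by auto
    moreover have "(y \<bullet> x) *\<^sub>R y \<in> span ?E" by (simp add: span_base span_scale)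
    ultimately have "?x' + (y \<bullet> x) *\<^sub>R y \<in> span ?E" by (rule span_add)
    then show "x \<in> span ?E" by simp
  qed
  have ind: "independent ?E"
    using po nrm by (intro pairwise_orthogonal_independent) auto
  have "card ?E = dim ?E" using ind by (simp add: dim_eq_card_independent)
  also have "\<dots> = dim (span ?E)" by simp
  also have "span ?E = UNIV" using sp by auto
  also have "dim (UNIV :: (real^'n) set) = CARD('n)" by simp
  finally have "card ?E = CARD('n)" .
  then show ?thesis using E(1) po nrm ymin by blast
qed

lemma det_from_eig:
  fixes A :: "real^'n^'n"
  assumes fin: "finite E" and card: "card E = CARD('n)" and po: "pairwise orthogonal E"
    and nrm: "\<And>e. e \<in> E \<Longrightarrow> norm e = 1"
    and eig: "\<And>e. e \<in> E \<Longrightarrow> A *v e = \<mu> e *\<^sub>R e"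
  shows "det A = prod \<mu> E"
proof -
  obtain f where f: "bij_betw f (UNIV::'n set) E"
    using finite_same_card_bij[OF finite_class.finite_UNIV fin] card by auto
  define Q :: "real^'n^'n" where "Q = (\<chi> i j. f j $ i)"
  define D :: "real^'n^'n" where "D = (\<chi> i j. if i = j then \<mu> (f j) else 0)"
  have fE: "f j \<in> E" for j using f by (auto simp: bij_betw_def)
  have finj: "f j = f k \<Longrightarrow> j = k" for j k using f by (auto simp: bij_betw_def inj_def)
  have ip: "f j \<bullet> f k = (if j = k then 1 else 0)" for j k
  proof (cases "j = k")
    case True then show ?thesis using nrm[OF fE[of j]] by (simp add: dot_square_norm)
  next
    case False then have "f j \<noteq> f k" using finj by blast
    then show ?thesis using po fE[of j] fE[of k] False by (auto simp: pairwise_def orthogonal_def)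
  qed
  have "transpose Q ** Q = mat 1"
    by (simp add: vec_eq_iff matrix_matrix_mult_def transpose_def Q_def mat_def ip[symmetric] inner_vec_def)
  then have "det (transpose Q) * det Q = 1" by (metis det_mul det_I)
  then have dQ: "det Q \<noteq> 0" by auto
  have "A ** Q = Q ** D"
  proof -
    have "(A ** Q) $ i $ j = (Q ** D) $ i $ j" for i j
    proof -
      have "(A ** Q) $ i $ j = (A *v f j) $ i"
        by (simp add: matrix_matrix_mult_def matrix_vector_mult_def Q_def)
      also have "\<dots> = \<mu> (f j) * f j $ i" using eig[OF fE[of j]] by simp
      also have "\<dots> = (Q ** D) $ i $ j"
        by (simp add: matrix_matrix_mult_def Q_def D_def if_distrib cong: if_cong)
      finally show ?thesis .
    qed
    then show ?thesis by (simp add: vec_eq_iff)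
  qed
  then have "det A * det Q = det Q * det D" by (metis det_mul)
  then have "det A = det D" using dQ by simp
  also have "det D = prod (\<lambda>j. \<mu> (f j)) UNIV"
    by (subst det_diagonal) (auto simp: D_def)
  also have "\<dots> = prod \<mu> E" using prod.reindex_bij_betw[OF f, of \<mu>] by simp
  finally show ?thesis .
qed

lemma pd_of_eig:
  fixes A :: "real^'n^'n"
  assumes sym: "transpose A = A" and ev: "\<forall>l. is_eigenvalue A l \<longrightarrow> l > 0"
    and z: "z \<noteq> 0"
  shows "z \<bullet> (A *v z) > 0"
proof -
  obtain y where yn: "norm y = 1" and yeig: "A *v y = (y \<bullet> (A *v y)) *\<^sub>R y"
     and ymin: "\<forall>x. (y \<bullet> (A *v y)) * (norm x)\<^sup>2 \<le> x \<bullet> (A *v x)"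
    using min_eig[OF sym subspace_UNIV, of "axis undefined 1"] by (auto simp: axis_eq_0_iff)
  have "y \<noteq> 0" using yn by auto
  then have "is_eigenvalue A (y \<bullet> (A *v y))" using yeig by (auto simp: is_eigenvalue_def)
  then have m: "y \<bullet> (A *v y) > 0" using ev by blast
  have "0 < (y \<bullet> (A *v y)) * (norm z)\<^sup>2" using m z by simp
  also have "\<dots> \<le> z \<bullet> (A *v z)" using ymin by blast
  finally show ?thesis .
qed

lemma det_bound:
  fixes A :: "real^'n^'n"
  assumes sym: "transpose A = A" and ev: "\<forall>l. is_eigenvalue A l \<longrightarrow> l > 0"
    and up: "\<And>z. z \<bullet> (A *v z) \<le> K * (norm z)\<^sup>2"
    and z0: "z0 \<noteq> 0" "z0 \<bullet> (A *v z0) \<le> eps * (norm z0)\<^sup>2"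
  shows "det A \<le> eps * K ^ (CARD('n) - 1)"
proof -
  obtain y E where E: "finite E" "card E = CARD('n)" "y \<in> E" "pairwise orthogonal E"
      "\<forall>e\<in>E. norm e = 1 \<and> A *v e = (e \<bullet> (A *v e)) *\<^sub>R e"
      and ymin: "\<forall>x. (y \<bullet> (A *v y)) * (norm x)\<^sup>2 \<le> x \<bullet> (A *v x)"
    using spectral_full[OF sym] by blast
  let ?\<mu> = "\<lambda>e. e \<bullet> (A *v e)"
  have pos: "?\<mu> e > 0" if "e \<in> E" for e
  proof -
    have "e \<noteq> 0" using E(5) that by auto
    then have "is_eigenvalue A (?\<mu> e)" using E(5) that by (auto simp: is_eigenvalue_def)
    then show ?thesis using ev by blast
  qed
  have le: "?\<mu> e \<le> K" if "e \<in> E" for e using up[of e] E(5) that by auto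
  have meps: "?\<mu> y \<le> eps"
  proof -
    have "?\<mu> y * (norm z0)\<^sup>2 \<le> eps * (norm z0)\<^sup>2" using ymin z0(2) order_trans by blast
    then show ?thesis using z0(1) by simp
  qed
  have "det A = prod ?\<mu> E" by (rule det_from_eig[OF E(1,2,4)]) (use E(5) in auto)
  also have "\<dots> = ?\<mu> y * prod ?\<mu> (E - {y})" using E(1,3) by (simp add: prod.remove)
  also have "\<dots> \<le> eps * K ^ (CARD('n) - 1)"
  proof (rule mult_mono)
    show "prod ?\<mu> (E - {y}) \<le> K ^ (CARD('n) - 1)"
    proof -
      have "prod ?\<mu> (E - {y}) \<le> prod (\<lambda>_. K) (E - {y})"
        using pos le by (intro prod_mono) (auto intro: less_imp_le)
      also have "\<dots> = K ^ (CARD('n) - 1)" using E(1,2,3) by (simp add: card_Diff_singleton)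
      finally show ?thesis .
    qed
    show "0 \<le> eps" using meps pos[OF E(3)] by linarith
    show "0 \<le> prod ?\<mu> (E - {y})" using pos by (intro prod_nonneg) (auto intro: less_imp_le)
  qed (use meps in auto)
  finally show ?thesis .
qed

lemma D1_axis: "D1 f p (axis i 1) = pd f i p"
proof -
  have "D1 f p (axis i 1) = (\<Sum>k\<in>UNIV. if k = i then pd f k p else 0)"
    unfolding D1_def by (intro sum.cong) (auto simp: axis_def)
  then show ?thesis by simp
qed

lemma sq_mvt:
  fixes f :: "real^'n \<Rightarrow> real"
  assumes C: "C2at f S" and h: "h > 0"
    and sq: "\<And>s t. 0 \<le> s \<Longrightarrow> s \<le> h \<Longrightarrow> 0 \<le> t \<Longrightarrow> t \<le> h \<Longrightarrow> x + s *\<^sub>R axis i 1 + t *\<^sub>R axis j 1 \<in> S"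
  shows "\<exists>\<xi> \<eta>. 0 < \<xi> \<and> \<xi> < h \<and> 0 < \<eta> \<and> \<eta> < h \<and>
     f (x + h *\<^sub>R axis i 1 + h *\<^sub>R axis j 1) - f (x + h *\<^sub>R axis i 1) - f (x + h *\<^sub>R axis j 1) + f x
       = h\<^sup>2 * pd (pd f i) j (x + \<xi> *\<^sub>R axis i 1 + \<eta> *\<^sub>R axis j 1)"
proof -
  let ?a = "axis i 1 :: real^'n" and ?b = "axis j 1 :: real^'n"
  define \<phi> where "\<phi> s = f ((x + h *\<^sub>R ?b) + s *\<^sub>R ?a) - f (x + s *\<^sub>R ?a)" for s
  have d\<phi>: "(\<phi> has_real_derivative (pd f i ((x + h *\<^sub>R ?b) + s *\<^sub>R ?a) - pd f i (x + s *\<^sub>R ?a))) (at s)"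
    if "0 \<le> s" "s \<le> h" for s
  proof -
    have m1: "(x + h *\<^sub>R ?b) + s *\<^sub>R ?a \<in> S" using sq[of s h] that h by (simp add: add_ac)
    have m2: "x + s *\<^sub>R ?a \<in> S" using sq[of s 0] that h by simp
    show ?thesis unfolding \<phi>_def
      using DERIV_diff[OF line_deriv1[OF C m1] line_deriv1[OF C m2]] by (simp add: D1_axis)
  qed
  have "\<exists>z. 0 < z \<and> z < h \<and> \<phi> h - \<phi> 0 = (h - 0) * (\<lambda>s. pd f i ((x + h *\<^sub>R ?b) + s *\<^sub>R ?a) - pd f i (x + s *\<^sub>R ?a)) z"
    by (rule MVT2[OF h]) (rule d\<phi>)
  then obtain \<xi> where \<xi>: "0 < \<xi>" "\<xi> < h" "\<phi> h - \<phi> 0 = (h - 0) * (pd f i ((x + h *\<^sub>R ?b) + \<xi> *\<^sub>R ?a) - pd f i (x + \<xi> *\<^sub>R ?a))"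
    by auto
  define \<psi> where "\<psi> t = pd f i ((x + \<xi> *\<^sub>R ?a) + t *\<^sub>R ?b)" for t
  have d\<psi>: "(\<psi> has_real_derivative pd (pd f i) j ((x + \<xi> *\<^sub>R ?a) + t *\<^sub>R ?b)) (at t)"
    if "0 \<le> t" "t \<le> h" for t
  proof -
    have m: "(x + \<xi> *\<^sub>R ?a) + t *\<^sub>R ?b \<in> S" using sq[of \<xi> t] that \<xi> by simp
    have C': "C2at f S" by fact
    then have "pd f i differentiable (at ((x + \<xi> *\<^sub>R ?a) + t *\<^sub>R ?b))" using m by (auto simp: C2at_def)
    then show ?thesis unfolding \<psi>_def using line_deriv[of "pd f i" "x + \<xi> *\<^sub>R ?a" t ?b]
      by (simp add: D1_axis[unfolded D1_def])
  qed
  have "\<exists>z. 0 < z \<and> z < h \<and> \<psi> h - \<psi> 0 = (h - 0) * (\<lambda>t. pd (pd f i) j ((x + \<xi> *\<^sub>R ?a) + t *\<^sub>R ?b)) z"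
    by (rule MVT2[OF h]) (rule d\<psi>)
  then obtain \<eta> where \<eta>: "0 < \<eta>" "\<eta> < h" "\<psi> h - \<psi> 0 = (h - 0) * pd (pd f i) j ((x + \<xi> *\<^sub>R ?a) + \<eta> *\<^sub>R ?b)"
    by auto
  have "f (x + h *\<^sub>R ?a + h *\<^sub>R ?b) - f (x + h *\<^sub>R ?a) - f (x + h *\<^sub>R ?b) + f x = \<phi> h - \<phi> 0"
    by (simp add: \<phi>_def add_ac)
  also have "\<dots> = h * (\<psi> h - \<psi> 0)" using \<xi>(3) by (simp add: \<psi>_def add_ac)
  also have "\<dots> = h\<^sup>2 * pd (pd f i) j (x + \<xi> *\<^sub>R ?a + \<eta> *\<^sub>R ?b)" using \<eta>(3) by (simp add: power2_eq_square)
  finally show ?thesis using \<xi> \<eta> by blast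
qed

lemma sq_near:
  fixes x :: "real^'n"
  assumes "0 \<le> s" "s \<le> h" "0 \<le> t" "t \<le> h"
  shows "dist (x + s *\<^sub>R axis i 1 + t *\<^sub>R axis j 1) x \<le> 2 * h"
proof -
  have "dist (x + s *\<^sub>R axis i 1 + t *\<^sub>R axis j 1) x = norm (s *\<^sub>R axis i 1 + t *\<^sub>R (axis j 1 :: real^'n))"
    by (simp add: dist_norm)
  also have "\<dots> \<le> norm (s *\<^sub>R (axis i 1 :: real^'n)) + norm (t *\<^sub>R (axis j 1 :: real^'n))" by (rule norm_triangle_ineq)
  also have "\<dots> = s + t" using assms by simp
  finally show ?thesis using assms by simp
qed

lemma hess_sym:
  fixes f :: "real^'n \<Rightarrow> real"
  assumes S: "open S" and xS: "x \<in> S" and C: "C2at f S"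
    and c1: "continuous_on S (pd (pd f i) j)" and c2: "continuous_on S (pd (pd f j) i)"
  shows "pd (pd f i) j x = pd (pd f j) i x"
proof (rule ccontr)
  let ?d = "\<bar>pd (pd f i) j x - pd (pd f j) i x\<bar>"
  assume "pd (pd f i) j x \<noteq> pd (pd f j) i x"
  then have dp: "?d > 0" by simp
  obtain e where e: "e > 0" "ball x e \<subseteq> S" using S xS open_contains_ball by blast
  obtain d1 where d1: "d1 > 0" "\<And>y. y \<in> S \<Longrightarrow> dist y x < d1 \<Longrightarrow> dist (pd (pd f i) j y) (pd (pd f i) j x) < ?d / 2"
    using c1 xS dp unfolding continuous_on_iff by (metis half_gt_zero)
  obtain d2 where d2: "d2 > 0" "\<And>y. y \<in> S \<Longrightarrow> dist y x < d2 \<Longrightarrow> dist (pd (pd f j) i y) (pd (pd f j) i x) < ?d / 2"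
    using c2 xS dp unfolding continuous_on_iff by (metis half_gt_zero)
  define h where "h = min e (min d1 d2) / 3"
  have h: "h > 0" "2 * h < e" "2 * h < d1" "2 * h < d2" using e d1 d2 by (auto simp: h_def)
  have inS: "y \<in> S" if "dist y x \<le> 2 * h" for y using that h e by (auto simp: dist_commute)
  have sq1: "x + s *\<^sub>R axis i 1 + t *\<^sub>R axis j 1 \<in> S" if "0 \<le> s" "s \<le> h" "0 \<le> t" "t \<le> h" for s t
    using inS sq_near that by blast
  have sq2: "x + s *\<^sub>R axis j 1 + t *\<^sub>R axis i 1 \<in> S" if "0 \<le> s" "s \<le> h" "0 \<le> t" "t \<le> h" for s t
    using inS sq_near that by blast
  obtain \<xi> \<eta> where a: "0 < \<xi>" "\<xi> < h" "0 < \<eta>" "\<eta> < h"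
    "f (x + h *\<^sub>R axis i 1 + h *\<^sub>R axis j 1) - f (x + h *\<^sub>R axis i 1) - f (x + h *\<^sub>R axis j 1) + f x
       = h\<^sup>2 * pd (pd f i) j (x + \<xi> *\<^sub>R axis i 1 + \<eta> *\<^sub>R axis j 1)"
    using sq_mvt[OF C h(1) sq1] by blast
  obtain \<xi>' \<eta>' where b: "0 < \<xi>'" "\<xi>' < h" "0 < \<eta>'" "\<eta>' < h"
    "f (x + h *\<^sub>R axis j 1 + h *\<^sub>R axis i 1) - f (x + h *\<^sub>R axis j 1) - f (x + h *\<^sub>R axis i 1) + f x
       = h\<^sup>2 * pd (pd f j) i (x + \<xi>' *\<^sub>R axis j 1 + \<eta>' *\<^sub>R axis i 1)"
    using sq_mvt[OF C h(1) sq2] by blast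
  let ?p1 = "x + \<xi> *\<^sub>R axis i 1 + \<eta> *\<^sub>R axis j 1" and ?p2 = "x + \<xi>' *\<^sub>R axis j 1 + \<eta>' *\<^sub>R axis i 1"
  have eqL: "f (x + h *\<^sub>R axis i 1 + h *\<^sub>R axis j 1) - f (x + h *\<^sub>R axis i 1) - f (x + h *\<^sub>R axis j 1) + f x
     = f (x + h *\<^sub>R axis j 1 + h *\<^sub>R axis i 1) - f (x + h *\<^sub>R axis j 1) - f (x + h *\<^sub>R axis i 1) + f x"
    by (simp add: add_ac)
  have "h\<^sup>2 * pd (pd f i) j ?p1 = h\<^sup>2 * pd (pd f j) i ?p2" using a(5) b(5) eqL by linarith
  then have eq: "pd (pd f i) j ?p1 = pd (pd f j) i ?p2" using h by simp
  have n1: "dist ?p1 x \<le> 2 * h" using a by (intro sq_near) auto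
  have n2: "dist ?p2 x \<le> 2 * h" using b by (intro sq_near) auto
  have q1: "dist (pd (pd f i) j ?p1) (pd (pd f i) j x) < ?d / 2" using d1(2)[OF inS[OF n1]] n1 h by linarith
  have q2: "dist (pd (pd f j) i ?p2) (pd (pd f j) i x) < ?d / 2" using d2(2)[OF inS[OF n2]] n2 h by linarith
  have aux: "\<And>a A b B :: real. \<bar>a - A\<bar> < \<bar>A - B\<bar> / 2 \<Longrightarrow> \<bar>b - B\<bar> < \<bar>A - B\<bar> / 2 \<Longrightarrow> a = b \<Longrightarrow> False"
    by (auto simp: abs_if split: if_splits)
  show False using aux[OF q1[unfolded dist_real_def] q2[unfolded dist_real_def] eq] .
qed

definition Rq :: "(real^'n \<Rightarrow> real) \<Rightarrow> real^'n \<Rightarrow> real^'n \<Rightarrow> real" where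
  "Rq u x y = (norm y)\<^sup>2 + (grad u x \<bullet> y)\<^sup>2 + u x * (y \<bullet> (hess u x *v y))"

lemma D_to_Rq:
  "(D1 u x y)\<^sup>2 + u x * D2 u x y = (grad u x \<bullet> y)\<^sup>2 + u x * (y \<bullet> (hess u x *v y))"
proof -
  have "D1 u x y = grad u x \<bullet> y" by (simp add: D1_def grad_def inner_vec_def mult.commute)
  moreover have "D2 u x y = y \<bullet> (hess u x *v y)"
  proof -
    have "D2 u x y = (\<Sum>i\<in>UNIV. \<Sum>j\<in>UNIV. y$i * y$j * pd (pd u i) j x)"
      by (simp add: D2_def sum_distrib_left mult_ac)
    also have "\<dots> = (\<Sum>j\<in>UNIV. \<Sum>i\<in>UNIV. y$i * y$j * pd (pd u i) j x)" by (rule sum.swap)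
    also have "\<dots> = y \<bullet> (hess u x *v y)"
      by (simp add: hess_def inner_vec_def matrix_vector_mult_def sum_distrib_left mult_ac)
    finally show ?thesis .
  qed
  ultimately show ?thesis by simp
qed

definition outer :: "real^'n \<Rightarrow> real^'n^'n" where "outer p = (\<chi> i k. p$i * p$k)"

lemma outer_mv: "outer p *v z = (p \<bullet> z) *\<^sub>R p"
  by (simp add: vec_eq_iff outer_def matrix_vector_mult_def inner_vec_def sum_distrib_left mult_ac)

lemma Mv_form:
  "(\<chi> k l. (if k = l then 1 else 0) + p $ k * p $ l + c * H $ k $ l) = mat 1 + outer p + c *\<^sub>R (H::real^'n^'n)"
  by (simp add: vec_eq_iff mat_def outer_def)

lemma Mv_quad:
  "y \<bullet> ((\<chi> k l. (if k = l then 1 else 0) + grad v x $ k * grad v x $ l + v x * hess v x $ k $ l) *v y) = Rq v x y"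
  unfolding Mv_form
  by (simp add: Rq_def matrix_vector_mult_add_rdistrib outer_mv inner_add_right
      scaleR_matrix_vector_assoc[symmetric] power2_eq_square inner_commute) (metis dot_square_norm power2_eq_square)

lemma w_props: "wfun u x \<ge> 1" "(wfun u x)\<^sup>2 = 1 + (norm (grad u x))\<^sup>2"
  unfolding wfun_def by auto

lemma gamma_form:
  "gammaM u x = mat 1 - (1 / (wfun u x * (1 + wfun u x))) *\<^sub>R outer (grad u x)"
  by (simp add: vec_eq_iff gammaM_def mat_def outer_def)

lemma gamma_vec:
  "gammaM u x *v z = z - ((grad u x \<bullet> z) / (wfun u x * (1 + wfun u x))) *\<^sub>R grad u x"
  unfolding gamma_form
  by (simp add: matrix_vector_mult_diff_rdistrib scaleR_matrix_vector_assoc[symmetric] outer_mv)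

lemma gamma_sym: "transpose (gammaM u x) = gammaM u x"
  by (simp add: vec_eq_iff gammaM_def transpose_def mult.commute)

lemma A1: fixes w s :: real assumes "w \<ge> 1"
  shows "- 2 * (s/(w*(1+w))) * s + (s/(w*(1+w)))\<^sup>2 * (w\<^sup>2 - 1) + (s - (s/(w*(1+w))) * (w\<^sup>2 - 1))\<^sup>2 = 0"
proof -
  have w0: "w > 0" "1 + w > 0" using assms by auto
  have e: "(s/(w*(1+w))) * (w\<^sup>2 - 1) = s * (w - 1) / w"
  proof -
    have "w\<^sup>2 - 1 = (w - 1) * (1 + w)" by (simp add: power2_eq_square algebra_simps)
    then show ?thesis using w0 by simp
  qed
  have e2: "s - s * (w - 1) / w = s / w" using w0 by (simp add: field_simps)
  have e3: "(s/(w*(1+w)))\<^sup>2 * (w\<^sup>2 - 1) = (s/(w*(1+w))) * (s * (w - 1) / w)"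
  proof -
    have "(s/(w*(1+w)))\<^sup>2 * (w\<^sup>2 - 1) = (s/(w*(1+w))) * ((s/(w*(1+w))) * (w\<^sup>2 - 1))"
      by (simp only: power2_eq_square mult.assoc)
    then show ?thesis by (simp only: e)
  qed
  have "- 2 * (s/(w*(1+w))) * s + (s/(w*(1+w))) * (s * (w - 1) / w) = (s/(w*(1+w))) * (s * (w - 1) / w - 2 * s)"
    by (simp add: algebra_simps)
  also have "s * (w - 1) / w - 2 * s = - s * (1 + w) / w" using w0 by (simp add: field_simps)
  also have "(s/(w*(1+w))) * (- s * (1 + w) / w) = - (s / w)\<^sup>2" using w0 by (simp add: power2_eq_square)
  finally show ?thesis using e e2 e3 by simp
qed
lemma A2: fixes w a :: real assumes "w \<ge> 1"
  shows "a/(1+w) - (a + (a/(1+w)) * (w\<^sup>2 - 1)) / (w*(1+w)) = 0"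
proof -
  have w0: "w > 0" "1 + w > 0" using assms by auto
  have "w\<^sup>2 - 1 = (w - 1) * (1 + w)" by (simp add: power2_eq_square algebra_simps)
  then have "(a/(1+w)) * (w\<^sup>2 - 1) = a * (w - 1)" using w0 by simp
  then have "a + (a/(1+w)) * (w\<^sup>2 - 1) = a * w" by (simp add: algebra_simps)
  then show ?thesis using w0 by simp
qed

lemma norm_sub_sq: "(norm (z - c *\<^sub>R p))\<^sup>2 = z \<bullet> z - 2 * c * (p \<bullet> z) + c\<^sup>2 * (p \<bullet> p)"
  for z p :: "'a::real_inner"
  unfolding power2_norm_eq_inner by (simp add: inner_diff_left inner_diff_right inner_commute power2_eq_square algebra_simps)

lemma gamma_id:
  "(norm (gammaM u x *v z))\<^sup>2 + (grad u x \<bullet> (gammaM u x *v z))\<^sup>2 = (norm z)\<^sup>2"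
proof -
  let ?p = "grad u x" and ?w = "wfun u x"
  define s where "s = ?p \<bullet> z"
  define c where "c = s / (?w * (1 + ?w))"
  have w1: "?w \<ge> 1" and P: "?p \<bullet> ?p = ?w\<^sup>2 - 1" using w_props[of u x] by (auto simp: dot_square_norm)
  have g: "gammaM u x *v z = z - c *\<^sub>R ?p" by (simp add: gamma_vec s_def c_def)
  have e1: "(norm (z - c *\<^sub>R ?p))\<^sup>2 = z \<bullet> z - 2 * c * s + c\<^sup>2 * (?w\<^sup>2 - 1)"
    using norm_sub_sq[of z c ?p] P by (simp add: s_def)
  have e2: "?p \<bullet> (z - c *\<^sub>R ?p) = s - c * (?w\<^sup>2 - 1)"
    using P by (simp add: inner_diff_right s_def)
  have key: "- 2 * c * s + c\<^sup>2 * (?w\<^sup>2 - 1) + (s - c * (?w\<^sup>2 - 1))\<^sup>2 = 0"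
    using A1[OF w1, of s] by (simp add: c_def)
  show ?thesis unfolding g e1 e2 using key by (simp add: dot_square_norm)
qed

lemma gamma_inv:
  "gammaM u x *v (y + ((grad u x \<bullet> y) / (1 + wfun u x)) *\<^sub>R grad u x) = y"
proof -
  let ?p = "grad u x" and ?w = "wfun u x"
  define c where "c = (?p \<bullet> y) / (1 + ?w)"
  have w1: "?w \<ge> 1" and P: "?p \<bullet> ?p = ?w\<^sup>2 - 1" using w_props[of u x] by (auto simp: dot_square_norm)
  have F0: "c - (?p \<bullet> y + c * (?p \<bullet> ?p)) / (?w * (1 + ?w)) = 0"
    unfolding P c_def by (rule A2[OF w1])
  have F1: "gammaM u x *v (y + c *\<^sub>R ?p) = y + (c - (?p \<bullet> y + c * (?p \<bullet> ?p)) / (?w * (1 + ?w))) *\<^sub>R ?p"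
    by (simp add: gamma_vec inner_add_right algebra_simps add_divide_distrib)
  have "gammaM u x *v (y + c *\<^sub>R ?p) = y"
    by (subst F1) (simp only: F0 scaleR_zero_left add_0_right)
  then show ?thesis unfolding c_def .
qed

lemma Amat_form:
  "Amat u x = (1 / wfun u x) *\<^sub>R (mat 1 + u x *\<^sub>R (gammaM u x ** hess u x ** gammaM u x))"
  by (simp add: vec_eq_iff Amat_def mat_def)

lemma Amat_quad:
  "wfun u x * (z \<bullet> (Amat u x *v z)) = Rq u x (gammaM u x *v z)"
proof -
  let ?g = "gammaM u x" and ?H = "hess u x" and ?w = "wfun u x"
  have w1: "?w \<ge> 1" using w_props by blast
  have "Amat u x *v z = (1 / ?w) *\<^sub>R (z + u x *\<^sub>R (?g *v (?H *v (?g *v z))))"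
    by (simp add: Amat_form scaleR_matrix_vector_assoc[symmetric] matrix_vector_mult_add_rdistrib
        matrix_vector_mul_assoc matrix_mul_assoc)
  then have "?w * (z \<bullet> (Amat u x *v z)) = z \<bullet> z + u x * (z \<bullet> (?g *v (?H *v (?g *v z))))"
    using w1 by (simp add: inner_add_right)
  also have "z \<bullet> (?g *v (?H *v (?g *v z))) = (?g *v z) \<bullet> (?H *v (?g *v z))"
    by (rule sym_inner[OF gamma_sym])
  also have "z \<bullet> z = (norm (?g *v z))\<^sup>2 + (grad u x \<bullet> (?g *v z))\<^sup>2"
    using gamma_id[of u x z] by (simp add: dot_square_norm)
  finally show ?thesis by (simp add: Rq_def)
qed

lemma Amat_sym:
  assumes "transpose (hess u x) = hess u x"
  shows "transpose (Amat u x) = Amat u x"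
proof -
  let ?g = "gammaM u x" and ?H = "hess u x"
  have T: "transpose (?g ** ?H ** ?g) = ?g ** ?H ** ?g"
    by (simp add: matrix_transpose_mul gamma_sym assms matrix_mul_assoc)
  have "(?g ** ?H ** ?g) $ j $ i = (?g ** ?H ** ?g) $ i $ j" for i j
    using T by (metis transpose_def vec_lambda_beta)
  then show ?thesis by (simp add: vec_eq_iff Amat_def transpose_def)
qed

lemma null_vec:
  fixes M :: "real^'n^'n"
  assumes "det M = 0"
  shows "\<exists>y. y \<noteq> 0 \<and> M *v y = 0"
  using assms det_eq_0_rank[of M] matrix_nonfull_linear_equations_eq[of M] by auto

lemma core:
  fixes f g :: "real^'n \<Rightarrow> real"
  assumes S: "open S" and f: "C2at f S" and g: "C2at g S" and pS: "p \<in> S"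
    and mx: "\<And>x. x \<in> S \<Longrightarrow> (f x)\<^sup>2 - (g x)\<^sup>2 - lam * (norm (x - x0))\<^sup>2
                      \<le> (f p)\<^sup>2 - (g p)\<^sup>2 - lam * (norm (p - x0))\<^sup>2"
    and hsym: "transpose (hess f p) = hess f p"
    and ev: "\<forall>l. is_eigenvalue (Amat f p) l \<longrightarrow> l > 0"
    and gdet: "det (\<chi> k l. (if k = l then 1 else 0) + grad g p $ k * grad g p $ l + g p * hess g p $ k $ l) = 0"
    and lam: "lam \<ge> 0"
  shows "lam > 0 \<and> (\<forall>Mb. (\<forall>y. Rq g p y \<le> Mb * (norm y)\<^sup>2) \<longrightarrow> Mb + lam \<ge> 0 \<longrightarrow>
           det (Amat f p) \<le> lam * (Mb + lam) ^ (CARD('n) - 1))"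
proof -
  let ?A = "Amat f p" and ?w = "wfun f p" and ?g = "gammaM f p" and ?q = "grad f p"
  have cmp: "Rq f p y \<le> Rq g p y + lam * (norm y)\<^sup>2" for y
    using comparison_at_max[OF S f g pS mx, of y] D_to_Rq[of f p y] D_to_Rq[of g p y]
    by (simp add: Rq_def)
  obtain y0 where y0: "y0 \<noteq> 0" "(\<chi> k l. (if k = l then 1 else 0) + grad g p $ k * grad g p $ l + g p * hess g p $ k $ l) *v y0 = 0"
    using null_vec[OF gdet] by blast
  have Rg0: "Rq g p y0 = 0" using Mv_quad[of y0 g p] y0(2) by simp
  define z0 where "z0 = y0 + ((?q \<bullet> y0) / (1 + ?w)) *\<^sub>R ?q"
  have gz0: "?g *v z0 = y0" unfolding z0_def by (rule gamma_inv)
  have z0nz: "z0 \<noteq> 0" using gz0 y0(1) by auto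
  have w1: "?w \<ge> 1" using w_props by blast
  have symA: "transpose ?A = ?A" by (rule Amat_sym[OF hsym])
  have e: "(norm y0)\<^sup>2 + (?q \<bullet> y0)\<^sup>2 = (norm z0)\<^sup>2" using gamma_id[of f p z0] gz0 by simp
  have nz0: "(norm y0)\<^sup>2 \<le> (norm z0)\<^sup>2" using e zero_le_power2[of "?q \<bullet> y0"] by linarith
  have q0: "?w * (z0 \<bullet> (?A *v z0)) \<le> lam * (norm y0)\<^sup>2"
    using Amat_quad[of f p z0] gz0 cmp[of y0] Rg0 by simp
  have small: "z0 \<bullet> (?A *v z0) \<le> lam * (norm z0)\<^sup>2"
  proof -
    have "z0 \<bullet> (?A *v z0) \<le> lam * (norm y0)\<^sup>2 / ?w" using q0 w1 by (simp add: field_simps)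
    also have "\<dots> \<le> lam * (norm y0)\<^sup>2"
    proof -
      have nn: "0 \<le> lam * (norm y0)\<^sup>2" using lam by simp
      then show ?thesis using w1 by (simp add: divide_le_eq mult_le_cancel_left1)
    qed
    also have "\<dots> \<le> lam * (norm z0)\<^sup>2" using nz0 lam by (simp add: mult_left_mono)
    finally show ?thesis .
  qed
  have lpos: "lam > 0"
  proof (rule ccontr)
    assume "\<not> lam > 0" then have "lam = 0" using lam by simp
    then have "z0 \<bullet> (?A *v z0) \<le> 0" using small by simp
    moreover have "z0 \<bullet> (?A *v z0) > 0" by (rule pd_of_eig[OF symA ev z0nz])
    ultimately show False by simp
  qed
  have bound: "det ?A \<le> lam * (Mb + lam) ^ (CARD('n) - 1)"
    if Mb: "\<forall>y. Rq g p y \<le> Mb * (norm y)\<^sup>2" and Mbl: "Mb + lam \<ge> 0" for Mb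
  proof (rule det_bound[OF symA ev _ z0nz small])
    fix z
    have "?w * (z \<bullet> (?A *v z)) \<le> (Mb + lam) * (norm (?g *v z))\<^sup>2"
      using Amat_quad[of f p z] cmp[of "?g *v z"] Mb by (simp add: algebra_simps)
        (smt (verit) Mb)
    also have "\<dots> \<le> (Mb + lam) * (norm z)\<^sup>2"
    proof -
      have "(norm (?g *v z))\<^sup>2 \<le> (norm z)\<^sup>2"
        using gamma_id[of f p z] zero_le_power2[of "?q \<bullet> (?g *v z)"] by linarith
      then show ?thesis using Mbl by (intro mult_left_mono)
    qed
    finally have h: "?w * (z \<bullet> (?A *v z)) \<le> (Mb + lam) * (norm z)\<^sup>2" .
    show "z \<bullet> (?A *v z) \<le> (Mb + lam) * (norm z)\<^sup>2"
    proof (cases "z \<bullet> (?A *v z) \<ge> 0")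
      case True
      then have "z \<bullet> (?A *v z) \<le> ?w * (z \<bullet> (?A *v z))" using w1 by (simp add: mult_le_cancel_right1)
      then show ?thesis using h by linarith
    next
      case False
      then show ?thesis using Mbl by (smt (verit) zero_le_power2 mult_nonneg_nonneg)
    qed
  qed
  show ?thesis using lpos bound by blast
qed

lemma Ck_Suc_imp: "Ck_on (Suc k) S f \<Longrightarrow> Ck_on k S f"
proof (induction k arbitrary: f)
  case 0 then show ?case by (simp add: differentiable_imp_continuous_on)
next
  case (Suc k) then show ?case by auto
qed

lemma Ck_le: "k \<le> m \<Longrightarrow> Ck_on m S f \<Longrightarrow> Ck_on k S f"
proof (induction m)
  case 0 then show ?case by simp
next
  case (Suc m) then show ?case using Ck_Suc_imp le_Suc_eq by blast
qed

lemma pd_eq: "pd f i = pderiv_dir f (axis i 1)"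
  by (simp add: fun_eq_iff pd_def pderiv_dir_def)

lemma C2_facts:
  assumes S: "open S" and C: "Ck_on 2 S f"
  shows "C2at f S" "\<And>i j. continuous_on S (pd (pd f i) j)" "\<And>i. continuous_on S (pd f i)"
    "continuous_on S f"
proof -
  have ax: "axis i (1::real) \<in> Basis" for i :: 'a by simp
  have C': "f differentiable_on S"
    "\<And>b. b \<in> Basis \<Longrightarrow> pderiv_dir f b differentiable_on S"
    "\<And>b b'. b \<in> Basis \<Longrightarrow> b' \<in> Basis \<Longrightarrow> continuous_on S (pderiv_dir (pderiv_dir f b) b')"
    using C by (auto simp: numeral_2_eq_2)
  show "C2at f S" unfolding C2at_def
    using C'(1) C'(2)[OF ax] S by (auto simp: pd_eq differentiable_on_eq_differentiable_at)
  show "continuous_on S (pd (pd f i) j)" for i j using C'(3)[OF ax ax] by (simp add: pd_eq)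
  show "continuous_on S (pd f i)" for i
    using C'(2)[OF ax] by (simp add: pd_eq differentiable_imp_continuous_on)
  show "continuous_on S f" using C'(1) by (simp add: differentiable_imp_continuous_on)
qed

lemma hess_symm:
  assumes S: "open S" and C: "Ck_on 2 S f" and x: "x \<in> S"
  shows "transpose (hess f x) = hess f x"
proof -
  have "pd (pd f i) j x = pd (pd f j) i x" for i j
    by (rule hess_sym[OF S x C2_facts(1)[OF S C] C2_facts(2)[OF S C] C2_facts(2)[OF S C]])
  then show ?thesis by (simp add: vec_eq_iff transpose_def hess_def)
qed

lemma quad_le_abs_sum:
  fixes M :: "real^'n^'n"
  shows "y \<bullet> (M *v y) \<le> (\<Sum>k\<in>UNIV. \<Sum>l\<in>UNIV. \<bar>M$k$l\<bar>) * (norm y)\<^sup>2"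
proof -
  have "y \<bullet> (M *v y) = (\<Sum>k\<in>UNIV. \<Sum>l\<in>UNIV. y$k * M$k$l * y$l)"
    by (simp add: inner_vec_def matrix_vector_mult_def sum_distrib_left mult_ac)
  also have "\<dots> \<le> (\<Sum>k\<in>UNIV. \<Sum>l\<in>UNIV. \<bar>M$k$l\<bar> * (norm y)\<^sup>2)"
  proof (intro sum_mono)
    fix k l
    have "y$k * M$k$l * y$l \<le> \<bar>y$k * M$k$l * y$l\<bar>" by simp
    also have "\<dots> = \<bar>M$k$l\<bar> * (\<bar>y$k\<bar> * \<bar>y$l\<bar>)" by (simp add: abs_mult mult_ac)
    also have "\<dots> \<le> \<bar>M$k$l\<bar> * (norm y * norm y)"
      by (intro mult_left_mono mult_mono component_le_norm_cart) auto
    finally show "y$k * M$k$l * y$l \<le> \<bar>M$k$l\<bar> * (norm y)\<^sup>2" by (simp add: power2_eq_square)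
  qed
  also have "\<dots> = (\<Sum>k\<in>UNIV. \<Sum>l\<in>UNIV. \<bar>M$k$l\<bar>) * (norm y)\<^sup>2"
    by (simp add: sum_distrib_right)
  finally show ?thesis .
qed

lemma Rq_bound:
  assumes S: "open S" and C: "Ck_on 2 S g" and K: "compact K" "K \<subseteq> S"
  shows "\<exists>Mb\<ge>0. \<forall>x\<in>K. \<forall>y. Rq g x y \<le> Mb * (norm y)\<^sup>2"
proof -
  define M where "M x = (\<chi> k l. (if k = l then 1 else 0) + grad g x $ k * grad g x $ l + g x * hess g x $ k $ l)" for x
  define B where "B x = (\<Sum>k\<in>UNIV. \<Sum>l\<in>UNIV. \<bar>M x$k$l\<bar>)" for x
  have cB: "continuous_on S B"
    unfolding B_def M_def grad_def hess_def
    using C2_facts(2,3,4)[OF S C]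
    by (auto intro!: continuous_intros)
  have "bounded (B ` K)" using compact_continuous_image[OF continuous_on_subset[OF cB K(2)] K(1)]
    by (rule compact_imp_bounded)
  then obtain b where b: "\<And>x. x \<in> K \<Longrightarrow> \<bar>B x\<bar> \<le> b" by (auto simp: bounded_iff)
  have "\<forall>x\<in>K. \<forall>y. Rq g x y \<le> max b 0 * (norm y)\<^sup>2"
  proof (intro ballI allI)
    fix x y assume x: "x \<in> K"
    have "Rq g x y = y \<bullet> (M x *v y)" using Mv_quad[of y g x] by (simp add: M_def)
    also have "\<dots> \<le> B x * (norm y)\<^sup>2" unfolding B_def by (rule quad_le_abs_sum)
    also have "\<dots> \<le> max b 0 * (norm y)\<^sup>2" using b[OF x] by (intro mult_right_mono) auto
    finally show "Rq g x y \<le> max b 0 * (norm y)\<^sup>2" .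
  qed
  then show ?thesis by (intro exI[of _ "max b 0"]) auto
qed

lemma psi_bound:
  fixes \<psi> :: "(real^'n) \<times> real \<times> (real^'n) \<Rightarrow> real"
  assumes cont: "continuous_on (\<Omega> \<times> {0<..} \<times> UNIV) \<psi>"
    and pos: "\<forall>x\<in>\<Omega>. \<forall>z>0. \<forall>p. \<psi> (x, z, p) > 0"
    and K: "compact K" "K \<subseteq> \<Omega>" and a: "a > 0"
  shows "\<exists>c>0. \<forall>x\<in>K. \<forall>z. a \<le> z \<longrightarrow> z \<le> C \<longrightarrow> (\<forall>q. norm q \<le> C \<longrightarrow> c \<le> \<psi> (x, z, q))"
proof -
  let ?T = "K \<times> {a..C} \<times> cball (0::real^'n) C"
  have cT: "compact ?T" using K(1) by (intro compact_Times) auto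
  have sub: "?T \<subseteq> \<Omega> \<times> {0<..} \<times> UNIV" using K(2) a by auto
  show ?thesis
  proof (cases "?T = {}")
    case True
    then have "\<forall>x\<in>K. \<forall>z. a \<le> z \<longrightarrow> z \<le> C \<longrightarrow> (\<forall>q. norm q \<le> C \<longrightarrow> 1 \<le> \<psi> (x, z, q))"
      by (auto simp: dist_norm) (smt (verit) norm_ge_zero)
    then show ?thesis by (intro exI[of _ 1]) auto
  next
    case False
    obtain t where t: "t \<in> ?T" "\<And>s. s \<in> ?T \<Longrightarrow> \<psi> t \<le> \<psi> s"
      using continuous_attains_inf[OF cT False continuous_on_subset[OF cont sub]] by blast
    have "\<psi> t > 0"
    proof -
      obtain x z q where tq: "t = (x, z, q)" by (cases t) auto
      have "x \<in> \<Omega>" "z > 0" using t(1) tq K(2) a by auto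
      then show ?thesis using pos tq by auto
    qed
    moreover have "\<forall>x\<in>K. \<forall>z. a \<le> z \<longrightarrow> z \<le> C \<longrightarrow> (\<forall>q. norm q \<le> C \<longrightarrow> \<psi> t \<le> \<psi> (x, z, q))"
      using t(2) by (auto simp: dist_norm)
    ultimately show ?thesis by blast
  qed
qed

lemma C2at_mono: "C2at g T \<Longrightarrow> S \<subseteq> T \<Longrightarrow> C2at g S"
  by (auto simp: C2at_def)

abbreviation Mg :: "(real^'n \<Rightarrow> real) \<Rightarrow> real^'n \<Rightarrow> real^'n^'n" where
  "Mg g x \<equiv> (\<chi> k l. (if k = l then 1 else 0) + grad g x $ k * grad g x $ l + g x * hess g x $ k $ l)"

lemma qual_comp:
  fixes f g :: "real^'n \<Rightarrow> real"
  assumes D: "open D" "bounded D"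
    and Cf: "Ck_on 2 D f" and Cg: "C2at g D"
    and conv: "strictly_locally_convex f D"
    and gdet: "\<forall>x\<in>D. det (Mg g x) = 0"
    and cf: "continuous_on (closure D) f" and cg: "continuous_on (closure D) g"
    and bd: "\<forall>x\<in>frontier D. (f x)\<^sup>2 \<le> (g x)\<^sup>2"
  shows "\<forall>x\<in>closure D. (f x)\<^sup>2 \<le> (g x)\<^sup>2"
proof (cases "closure D = {}")
  case True then show ?thesis by simp
next
  case False
  let ?F = "\<lambda>x. (f x)\<^sup>2 - (g x)\<^sup>2"
  have cF: "continuous_on (closure D) ?F" using cf cg by (intro continuous_intros)
  obtain p where p: "p \<in> closure D" "\<And>x. x \<in> closure D \<Longrightarrow> ?F x \<le> ?F p"
    using continuous_attains_sup[OF compact_closure[THEN iffD2, OF D(2)] False cF] by blast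
  have "?F p \<le> 0"
  proof (rule ccontr)
    assume pos: "\<not> ?F p \<le> 0"
    have "p \<notin> frontier D" using bd pos by auto
    then have pD: "p \<in> D" using p(1) closure_Un_frontier by auto
    have mx: "\<And>x. x \<in> D \<Longrightarrow> (f x)\<^sup>2 - (g x)\<^sup>2 - 0 * (norm (x - p))\<^sup>2
                      \<le> (f p)\<^sup>2 - (g p)\<^sup>2 - 0 * (norm (p - p))\<^sup>2"
      using p(2) closure_subset by auto
    have "(0::real) > 0"
      using core[OF D(1) C2_facts(1)[OF D(1) Cf] Cg pD mx hess_symm[OF D(1) Cf pD] _ gdet[rule_format, OF pD]]
        conv pD by (auto simp: strictly_locally_convex_def)
    then show False by simp
  qed
  then show ?thesis using p(2) by force
qed

lemma quant_comp:
  fixes f g :: "real^'n \<Rightarrow> real"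
  assumes D: "open D" and Cf: "Ck_on 2 D f" and Cg: "C2at g D"
    and conv: "strictly_locally_convex f D"
    and gdet: "\<forall>x\<in>D. det (Mg g x) = 0"
    and cf: "continuous_on D f" and cg: "continuous_on D g"
    and r: "r \<ge> 0" and cb: "cball x0 r \<subseteq> D"
    and sph: "\<forall>x\<in>cball x0 r. (f x)\<^sup>2 \<le> (g x)\<^sup>2"
    and Mb: "\<forall>x\<in>ball x0 r. \<forall>y. Rq g x y \<le> Mb * (norm y)\<^sup>2" and Mb0: "Mb \<ge> 0"
    and c: "\<forall>x\<in>ball x0 r. det (Amat f x) \<ge> c"
    and tau: "\<tau> > 0" "\<tau> * (Mb + \<tau>) ^ (CARD('n) - 1) < c"
  shows "(g x0)\<^sup>2 - (f x0)\<^sup>2 \<ge> \<tau> * r\<^sup>2"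
proof -
  let ?F = "\<lambda>x. (f x)\<^sup>2 - (g x)\<^sup>2 - \<tau> * (norm (x - x0))\<^sup>2"
  have cF: "continuous_on (cball x0 r) ?F"
    using continuous_on_subset[OF cf cb] continuous_on_subset[OF cg cb] by (intro continuous_intros)
  have ne: "cball x0 r \<noteq> {}" using r by auto
  obtain p where p: "p \<in> cball x0 r" "\<And>x. x \<in> cball x0 r \<Longrightarrow> ?F x \<le> ?F p"
    using continuous_attains_sup[OF compact_cball ne cF] by blast
  have "?F p \<le> - \<tau> * r\<^sup>2"
  proof (rule ccontr)
    assume big: "\<not> ?F p \<le> - \<tau> * r\<^sup>2"
    have "dist x0 p \<noteq> r"
    proof
      assume "dist x0 p = r"
      then have "norm (p - x0) = r" by (simp add: dist_norm norm_minus_commute)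
      then show False using big sph p(1) by auto
    qed
    then have pb: "p \<in> ball x0 r" using p(1) by auto
    have bD: "ball x0 r \<subseteq> D" using cb ball_subset_cball by blast
    have pD: "p \<in> D" using pb bD by blast
    have mx: "\<And>x. x \<in> ball x0 r \<Longrightarrow> ?F x \<le> ?F p" using p(2) by auto
    have ev: "\<forall>l. is_eigenvalue (Amat f p) l \<longrightarrow> l > 0" using conv pD by (auto simp: strictly_locally_convex_def)
    have "det (Amat f p) \<le> \<tau> * (Mb + \<tau>) ^ (CARD('n) - 1)"
      using core[OF open_ball C2at_mono[OF C2_facts(1)[OF D Cf] bD] C2at_mono[OF Cg bD] pb mx
          hess_symm[OF D Cf pD] ev gdet[rule_format, OF pD]] tau Mb pb Mb0 by auto
    then show False using c pb tau by force
  qed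
  moreover have "?F x0 \<le> ?F p" using p(2)[of x0] r by simp
  ultimately show ?thesis by simp
qed

lemma OmegaL_open:
  assumes "open \<Omega>" "continuous_on \<Omega> ub"
  shows "open (OmegaL \<Omega> ub e)"
proof -
  have "OmegaL \<Omega> ub e = \<Omega> \<inter> ub -` {e<..}" by (auto simp: OmegaL_def)
  then show ?thesis using continuous_open_preimage[OF assms(2,1), of "{e<..}"] by simp
qed

lemma closure_OmegaL:
  assumes cont: "continuous_on (closure \<Omega>) ub" and bd: "\<forall>x\<in>frontier \<Omega>. ub x = 0" and h: "h > 0"
  shows "closure (OmegaL \<Omega> ub h) \<subseteq> \<Omega>" "\<forall>x\<in>closure (OmegaL \<Omega> ub h). ub x \<ge> h"
proof -
  have cl: "closed (closure \<Omega> \<inter> ub -` {h..})"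
    by (rule continuous_closed_preimage[OF cont]) auto
  have "OmegaL \<Omega> ub h \<subseteq> closure \<Omega> \<inter> ub -` {h..}"
    using closure_subset by (auto simp: OmegaL_def)
  then have sub: "closure (OmegaL \<Omega> ub h) \<subseteq> closure \<Omega> \<inter> ub -` {h..}"
    by (rule closure_minimal[OF _ cl])
  then show "\<forall>x\<in>closure (OmegaL \<Omega> ub h). ub x \<ge> h" by auto
  show "closure (OmegaL \<Omega> ub h) \<subseteq> \<Omega>"
  proof
    fix x assume x: "x \<in> closure (OmegaL \<Omega> ub h)"
    then have "x \<in> closure \<Omega>" "ub x \<ge> h" using sub by auto
    then have "x \<notin> frontier \<Omega>" using bd h by auto
    then show "x \<in> \<Omega>" using \<open>x \<in> closure \<Omega>\<close> closure_Un_frontier by auto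
  qed
qed

lemma ball_in_OmegaL:
  assumes op: "open (OmegaL \<Omega> ub h)"
    and reg: "frontier (OmegaL \<Omega> ub h) = GammaL \<Omega> ub h"
    and x0: "x0 \<in> A" and x0h: "x0 \<in> OmegaL \<Omega> ub h"
  shows "ball x0 (setdist A (GammaL \<Omega> ub h)) \<subseteq> OmegaL \<Omega> ub h"
proof -
  let ?r = "setdist A (GammaL \<Omega> ub h)" and ?U = "OmegaL \<Omega> ub h"
  let ?V = "- closure ?U"
  have nG: "z \<notin> GammaL \<Omega> ub h" if "z \<in> ball x0 ?r" for z
  proof
    assume "z \<in> GammaL \<Omega> ub h"
    then have "?r \<le> dist x0 z" using setdist_le_dist[OF x0] by blast
    then show False using that by simp
  qed
  have cov: "ball x0 ?r \<subseteq> ?U \<union> ?V"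
  proof
    fix z assume z: "z \<in> ball x0 ?r"
    show "z \<in> ?U \<union> ?V"
    proof (cases "z \<in> closure ?U")
      case True
      then have "z \<in> ?U \<or> z \<in> frontier ?U" using closure_Un_frontier by auto
      then show ?thesis using nG[OF z] reg by auto
    qed auto
  qed
  have dis: "?U \<inter> ?V \<inter> ball x0 ?r = {}" using closure_subset by auto
  have "?U \<inter> ball x0 ?r = {} \<or> ?V \<inter> ball x0 ?r = {}"
    by (rule connectedD[OF connected_ball op _ dis cov]) auto
  note D = this
  show ?thesis
  proof (cases "?r > 0")
    case True
    then have "x0 \<in> ?U \<inter> ball x0 ?r" using x0h by auto
    then have "?V \<inter> ball x0 ?r = {}" using D by blast
    then show ?thesis using cov by blast
  next
    case False
    then have "ball x0 ?r = {}" by (simp add: ball_empty)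
    then show ?thesis by (metis empty_subsetI)
  qed
qed

lemma tau_choice:
  fixes Mb c :: real and n :: nat
  assumes "Mb \<ge> 0" "c > 0"
  shows "\<exists>\<tau>>0. \<tau> * (Mb + \<tau>) ^ n < c"
proof -
  define K where "K = (Mb + 1) ^ n"
  have K1: "K \<ge> 1" using assms by (simp add: K_def one_le_power)
  define \<tau> where "\<tau> = min 1 (c / (2 * K))"
  have tp: "\<tau> > 0" using assms K1 by (simp add: \<tau>_def)
  have "\<tau> * (Mb + \<tau>) ^ n \<le> \<tau> * K"
    unfolding K_def using tp assms by (intro mult_left_mono power_mono) (auto simp: \<tau>_def)
  also have "\<dots> \<le> c / (2 * K) * K" using K1 by (intro mult_right_mono) (auto simp: \<tau>_def)
  also have "\<dots> = c / 2" using K1 by simp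
  also have "\<dots> < c" using assms by simp
  finally show ?thesis using tp by blast
qed

theorem mainTheorem6:
  fixes \<Omega> :: "(real^'n) set"
    and \<psi> :: "(real^'n) \<times> real \<times> (real^'n) \<Rightarrow> real"
    and v ub :: "real^'n \<Rightarrow> real"
    and u :: "real \<Rightarrow> real^'n \<Rightarrow> real"
  assumes dom: "open \<Omega>" "connected \<Omega>" "bounded \<Omega>" "\<Omega> \<noteq> {}"
    and psi_smooth: "smooth_on (\<Omega> \<times> {0<..} \<times> UNIV) \<psi>"
    and psi_pos: "\<forall>x\<in>\<Omega>. \<forall>z>0. \<forall>p. \<psi> (x, z, p) > 0"
    and v_C2: "Ck_on 2 \<Omega> v" and v_cont: "continuous_on (closure \<Omega>) v"
    and v_conv: "locally_convex v \<Omega>"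
    and v_eq: "\<forall>x\<in>\<Omega>. det (\<chi> k l. (if k = l then 1 else 0) + grad v x $ k * grad v x $ l
                                   + v x * hess v x $ k $ l) = 0"
    and v_bdry: "\<forall>x\<in>frontier \<Omega>. v x = 0"
    and ub_C4: "Ck_on 4 \<Omega> ub" and ub_cont: "continuous_on (closure \<Omega>) ub"
    and ub_conv: "strictly_locally_convex ub \<Omega>"
    and ub_sub: "\<forall>x\<in>\<Omega>. det (Amat ub x) \<ge> \<psi> (x, ub x, grad ub x)"
    and ub_bdry: "\<forall>x\<in>frontier \<Omega>. ub x = 0"
    and regular: "\<exists>e1>0. \<forall>e. 0 < e \<and> e < e1 \<longrightarrow> regular_boundary \<Omega> ub e"
    and sol: "\<exists>e1>0. \<forall>e. 0 < e \<and> e < e1 \<longrightarrow>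
               smooth_on (OmegaL \<Omega> ub e) (u e)
             \<and> continuous_on (closure (OmegaL \<Omega> ub e)) (u e)
             \<and> strictly_locally_convex (u e) (OmegaL \<Omega> ub e)
             \<and> (\<forall>x\<in>OmegaL \<Omega> ub e. u e x \<ge> ub x)
             \<and> (\<forall>x\<in>OmegaL \<Omega> ub e. det (Amat (u e) x) = \<psi> (x, u e x, grad (u e) x))
             \<and> (\<forall>x\<in>GammaL \<Omega> ub e. u e x = e)"
    and C1bound: "\<exists>e2>0. \<forall>e'. 0 < e' \<and> e' < e2 \<longrightarrow> (\<exists>C. \<forall>e. 0 < e \<and> e < e' / 2 \<longrightarrow>
               (\<forall>x\<in>closure (OmegaL \<Omega> ub e'). \<bar>u e x\<bar> \<le> C \<and> norm (grad (u e) x) \<le> C))"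
  shows "\<exists>e3>0. \<forall>e0. 0 < e0 \<and> e0 < e3 \<longrightarrow>
           (\<exists>\<tau>>0. \<forall>e. 0 < e \<and> e < e0 / 4 \<longrightarrow>
              (\<forall>x\<in>OmegaL \<Omega> ub e0.
                 (v x)\<^sup>2 + (norm x)\<^sup>2 - ((u e x)\<^sup>2 + (norm x)\<^sup>2)
                   \<ge> \<tau> * (setdist (OmegaL \<Omega> ub e0) (GammaL \<Omega> ub (e0 / 2)))\<^sup>2))"
proof -
  obtain er where er: "er > 0" "\<forall>e. 0 < e \<and> e < er \<longrightarrow> regular_boundary \<Omega> ub e"
    using regular by blast
  obtain es where es: "es > 0" "\<forall>e. 0 < e \<and> e < es \<longrightarrow>
               smooth_on (OmegaL \<Omega> ub e) (u e)
             \<and> continuous_on (closure (OmegaL \<Omega> ub e)) (u e)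
             \<and> strictly_locally_convex (u e) (OmegaL \<Omega> ub e)
             \<and> (\<forall>x\<in>OmegaL \<Omega> ub e. u e x \<ge> ub x)
             \<and> (\<forall>x\<in>OmegaL \<Omega> ub e. det (Amat (u e) x) = \<psi> (x, u e x, grad (u e) x))
             \<and> (\<forall>x\<in>GammaL \<Omega> ub e. u e x = e)"
    using sol by blast
  obtain ec where ec: "ec > 0" "\<forall>e'. 0 < e' \<and> e' < ec \<longrightarrow> (\<exists>C. \<forall>e. 0 < e \<and> e < e' / 2 \<longrightarrow>
               (\<forall>x\<in>closure (OmegaL \<Omega> ub e'). \<bar>u e x\<bar> \<le> C \<and> norm (grad (u e) x) \<le> C))"
    using C1bound by blast
  have ubc: "continuous_on \<Omega> ub" using continuous_on_subset[OF ub_cont closure_subset] .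
  have ub2: "Ck_on 2 \<Omega> ub" by (rule Ck_le[OF _ ub_C4]) simp
  have Cv: "C2at v \<Omega>" by (rule C2_facts(1)[OF dom(1) v_C2])
  have Q1: "\<forall>x\<in>closure \<Omega>. (ub x)\<^sup>2 \<le> (v x)\<^sup>2"
    by (rule qual_comp[OF dom(1) dom(3) ub2 Cv ub_conv v_eq ub_cont v_cont]) (use ub_bdry v_bdry in auto)
  have psic: "continuous_on (\<Omega> \<times> {0<..} \<times> UNIV) \<psi>"
    using psi_smooth unfolding smooth_on_def by (metis Ck_on.simps(1))
  show ?thesis
  proof (rule exI[of _ "min (min er es) ec"], intro conjI allI impI)
    show "0 < min (min er es) ec" using er es ec by simp
    fix e0 assume e0: "0 < e0 \<and> e0 < min (min er es) ec"
    define h where "h = e0 / 2"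
    have h: "h > 0" "h < er" "h < ec" "h < es" using e0 by (auto simp: h_def)
    define Kc where "Kc = closure (OmegaL \<Omega> ub h)"
    have KcO: "Kc \<subseteq> \<Omega>" and Kcub: "\<forall>x\<in>Kc. ub x \<ge> h"
      using closure_OmegaL[OF ub_cont ub_bdry h(1)] by (auto simp: Kc_def)
    have cK: "compact Kc" unfolding compact_eq_bounded_closed Kc_def
      using bounded_subset[OF dom(3) KcO[unfolded Kc_def]] by simp
    obtain Mb where Mb0: "Mb \<ge> 0" and Mb: "\<forall>x\<in>Kc. \<forall>y. Rq v x y \<le> Mb * (norm y)\<^sup>2"
      using Rq_bound[OF dom(1) v_C2 cK KcO] by blast
    obtain C where C: "\<forall>e. 0 < e \<and> e < h / 2 \<longrightarrow> (\<forall>x\<in>Kc. \<bar>u e x\<bar> \<le> C \<and> norm (grad (u e) x) \<le> C)"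
      using ec(2) h by (auto simp: Kc_def)
    obtain c where c0: "c > 0" and c: "\<forall>x\<in>Kc. \<forall>z. h \<le> z \<longrightarrow> z \<le> C \<longrightarrow> (\<forall>q. norm q \<le> C \<longrightarrow> c \<le> \<psi> (x, z, q))"
      using psi_bound[OF psic psi_pos cK KcO h(1)] by blast
    obtain \<tau> where tau: "\<tau> > 0" "\<tau> * (Mb + \<tau>) ^ (CARD('n) - 1) < c"
      using tau_choice[OF Mb0 c0] by blast
    show "\<exists>\<tau>>0. \<forall>e. 0 < e \<and> e < e0 / 4 \<longrightarrow>
              (\<forall>x\<in>OmegaL \<Omega> ub e0.
                 (v x)\<^sup>2 + (norm x)\<^sup>2 - ((u e x)\<^sup>2 + (norm x)\<^sup>2)
                   \<ge> \<tau> * (setdist (OmegaL \<Omega> ub e0) (GammaL \<Omega> ub (e0 / 2)))\<^sup>2)"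
    proof (rule exI[of _ \<tau>], intro conjI allI impI ballI)
      show "\<tau> > 0" by fact
      fix e x0 assume e: "0 < e \<and> e < e0 / 4" and x0: "x0 \<in> OmegaL \<Omega> ub e0"
      let ?D = "OmegaL \<Omega> ub e"
      have ee: "e < es" "e < er" "e < h" "e < h / 2" using e e0 by (auto simp: h_def)
      have S: "smooth_on ?D (u e)" "continuous_on (closure ?D) (u e)" "strictly_locally_convex (u e) ?D"
          "\<forall>x\<in>?D. u e x \<ge> ub x" "\<forall>x\<in>?D. det (Amat (u e) x) = \<psi> (x, u e x, grad (u e) x)"
          "\<forall>x\<in>GammaL \<Omega> ub e. u e x = e"
        using es(2) e ee(1) by auto
      have Dopen: "open ?D" by (rule OmegaL_open[OF dom(1) ubc])
      have DO: "?D \<subseteq> \<Omega>" by (auto simp: OmegaL_def)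
      have Dbd: "bounded ?D" by (rule bounded_subset[OF dom(3) DO])
      have Cu: "Ck_on 2 ?D (u e)" using S(1) by (simp add: smooth_on_def)
      have CvD: "C2at v ?D" by (rule C2at_mono[OF Cv DO])
      have gD: "\<forall>x\<in>?D. det (Mg v x) = 0" using v_eq DO by auto
      have clD: "closure ?D \<subseteq> closure \<Omega>" by (rule closure_mono[OF DO])
      have regE: "regular_boundary \<Omega> ub e" using er(2) e ee(2) by auto
      have Q2: "\<forall>x\<in>closure ?D. (u e x)\<^sup>2 \<le> (v x)\<^sup>2"
      proof (rule qual_comp[OF Dopen Dbd Cu CvD S(3) gD S(2) continuous_on_subset[OF v_cont clD]])
        show "\<forall>x\<in>frontier ?D. (u e x)\<^sup>2 \<le> (v x)\<^sup>2"
        proof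
          fix x assume "x \<in> frontier ?D"
          then have x: "x \<in> GammaL \<Omega> ub e" using regE by (simp add: regular_boundary_def)
          then have "u e x = ub x" "x \<in> closure \<Omega>" using S(6) closure_subset by (auto simp: GammaL_def)
          then show "(u e x)\<^sup>2 \<le> (v x)\<^sup>2" using Q1 by simp
        qed
      qed
      define r where "r = setdist (OmegaL \<Omega> ub e0) (GammaL \<Omega> ub h)"
      have r0: "r \<ge> 0" by (simp add: r_def)
      have regH: "regular_boundary \<Omega> ub h" using er(2) h by auto
      have x0h: "x0 \<in> OmegaL \<Omega> ub h" using x0 e0 by (auto simp: OmegaL_def h_def)
      have bl: "ball x0 r \<subseteq> OmegaL \<Omega> ub h"
        unfolding r_def
        by (rule ball_in_OmegaL[OF OmegaL_open[OF dom(1) ubc] _ x0 x0h])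
           (use regH in \<open>simp add: regular_boundary_def\<close>)
      have cbK: "cball x0 r \<subseteq> Kc"
      proof (cases "r > 0")
        case True
        then have "cball x0 r = closure (ball x0 r)" by simp
        then show ?thesis unfolding Kc_def using closure_mono[OF bl] by simp
      next
        case False
        then have "r = 0" using r0 by simp
        then show ?thesis using x0h closure_subset by (auto simp: Kc_def)
      qed
      have KD: "Kc \<subseteq> ?D" using KcO Kcub ee(3) by (force simp: OmegaL_def)
      have cb: "cball x0 r \<subseteq> ?D" using cbK KD by blast
      have bK: "ball x0 r \<subseteq> Kc" using cbK ball_subset_cball by blast
      have sph: "\<forall>x\<in>cball x0 r. (u e x)\<^sup>2 \<le> (v x)\<^sup>2" using Q2 cb closure_subset by blast
      have Mb': "\<forall>x\<in>ball x0 r. \<forall>y. Rq v x y \<le> Mb * (norm y)\<^sup>2" using Mb bK by blast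
      have c': "\<forall>x\<in>ball x0 r. det (Amat (u e) x) \<ge> c"
      proof
        fix x assume xb: "x \<in> ball x0 r"
        have xK: "x \<in> Kc" using xb bK by blast
        have xD: "x \<in> ?D" using xK KD by blast
        have xh: "ub x > h" using xb bl by (auto simp: OmegaL_def)
        have uh: "u e x \<ge> h" using S(4) xD xh by force
        have uC: "\<bar>u e x\<bar> \<le> C" "norm (grad (u e) x) \<le> C" using C e ee(4) xK by auto
        have "c \<le> \<psi> (x, u e x, grad (u e) x)" using c xK uh uC by auto
        then show "det (Amat (u e) x) \<ge> c" using S(5) xD by simp
      qed
      have "(v x0)\<^sup>2 - (u e x0)\<^sup>2 \<ge> \<tau> * r\<^sup>2"
        by (rule quant_comp[OF Dopen Cu CvD S(3) gD continuous_on_subset[OF S(2) closure_subset]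
              continuous_on_subset[OF v_cont] r0 cb sph Mb' Mb0 c' tau])
           (use DO closure_subset in blast)
      then show "(v x0)\<^sup>2 + (norm x0)\<^sup>2 - ((u e x0)\<^sup>2 + (norm x0)\<^sup>2)
                   \<ge> \<tau> * (setdist (OmegaL \<Omega> ub e0) (GammaL \<Omega> ub (e0 / 2)))\<^sup>2"
        by (simp add: r_def h_def)
    qed
  qed
qed


end
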